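(* Let $f$ be a non-negative monotone submodular function on the ground set $[m]=\{1,\dots,m\}$ (identified with a function on $\{0,1\}^m$ via indicator vectors), and let $F$ be its multilinear extension. Let $\mathbf{x}\in[0,1]^m$ satisfy $\sum_{i=1}^m x_i\le 1$, and let $\mathbf{e}_i\in\{0,1\}^m$ denote the $i$-th standard unit vector. Then $F(\mathbf{x})\le\sum_{i=1}^m x_i f(\mathbf{e}_i)+\left(1-\sum_{i=1}^m x_i\right)f(\mathbf{0})$.
   Context: The multilinear extension of $f$ is $F(\mathbf{x})=\sum_{T\subseteq[m]}\prod_{k\in T}x_k\prod_{k\notin T}(1-x_k)f(T)$ for $\mathbf{x}\in[0,1]^m$. $f$ submodular means $f(A\cup B)+f(A\cap B)\le f(A)+f(B)$ for all $A,B\subseteq[m]$; monotone means $f(A)\le f(B)$ for $A\subseteq B$. *)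

theory Defs
  imports Complex_Main
begin

definition submodular_on :: "nat \<Rightarrow> (nat set \<Rightarrow> real) \<Rightarrow> bool" where
  "submodular_on m f \<longleftrightarrow>
     (\<forall>A B. A \<subseteq> {1..m} \<longrightarrow> B \<subseteq> {1..m} \<longrightarrow> f (A \<union> B) + f (A \<inter> B) \<le> f A + f B)"

definition monotone_on_sets :: "nat \<Rightarrow> (nat set \<Rightarrow> real) \<Rightarrow> bool" where
  "monotone_on_sets m f \<longleftrightarrow> (\<forall>A B. A \<subseteq> B \<longrightarrow> B \<subseteq> {1..m} \<longrightarrow> f A \<le> f B)"

definition multilinear_ext :: "nat \<Rightarrow> (nat set \<Rightarrow> real) \<Rightarrow> (nat \<Rightarrow> real) \<Rightarrow> real" where
  "multilinear_ext m f x =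
     (\<Sum>T\<in>Pow {1..m}. (\<Prod>k\<in>T. x k) * (\<Prod>k\<in>{1..m} - T. 1 - x k) * f T)"

end

theory Submission
  imports Defs
begin

lemma subadd:
  assumes submod: "submodular_on m f"
  shows "finite T \<Longrightarrow> T \<subseteq> {1..m} \<Longrightarrow> f T \<le> f {} + (\<Sum>i\<in>T. f {i} - f {})"
proof (induction T rule: finite_induct)
  case empty
  then show ?case by simp
next
  case (insert i T)
  have "f (T \<union> {i}) + f (T \<inter> {i}) \<le> f T + f {i}"
    using submod[unfolded submodular_on_def, rule_format, of T "{i}"] insert.prems by simp
  moreover have "T \<inter> {i} = {}" using insert.hyps by auto
  ultimately have "f (insert i T) \<le> f T + f {i} - f {}" by simp
  moreover have "f T \<le> f {} + (\<Sum>j\<in>T. f {j} - f {})" using insert by simp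
  ultimately show ?case using insert.hyps by simp
qed

lemma psum1:
  fixes x :: "nat \<Rightarrow> real"
  assumes "finite S"
  shows "(\<Sum>T\<in>Pow S. (\<Prod>k\<in>T. x k) * (\<Prod>k\<in>S - T. 1 - x k)) = 1"
proof -
  have "(\<Prod>k\<in>S. x k + (1 - x k)) = (\<Sum>T\<in>Pow S. (\<Prod>k\<in>T. x k) * (\<Prod>k\<in>S - T. 1 - x k))"
    using prod_add[of S x "\<lambda>k. 1 - x k", OF assms] by simp
  then show ?thesis by simp
qed

lemma psumi:
  fixes x :: "nat \<Rightarrow> real"
  assumes "finite S" "i \<in> S"
  shows "(\<Sum>T\<in>Pow S. if i \<in> T then (\<Prod>k\<in>T. x k) * (\<Prod>k\<in>S - T. 1 - x k) else 0) = x i"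
proof -
  define y where "y = x(i := 0)"
  have P1: "(\<Prod>k\<in>S. y k + (1 - x k)) = (\<Sum>T\<in>Pow S. (\<Prod>k\<in>T. y k) * (\<Prod>k\<in>S - T. 1 - x k))"
    using prod_add[of S y "\<lambda>k. 1 - x k", OF assms(1)] by simp
  have P2: "(\<Prod>k\<in>S. y k + (1 - x k)) = (\<Prod>k\<in>S. if k = i then 1 - x i else 1)"
    by (rule prod.cong) (auto simp: y_def)
  have P3: "(\<Prod>k\<in>S. if k = i then 1 - x i else (1::real)) = 1 - x i"
    using assms by (simp add: prod.delta)
  have Y: "\<And>T. T \<in> Pow S \<Longrightarrow> (\<Prod>k\<in>T. y k) * (\<Prod>k\<in>S - T. 1 - x k)
      = (if i \<in> T then 0 else (\<Prod>k\<in>T. x k) * (\<Prod>k\<in>S - T. 1 - x k))"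
  proof -
    fix T assume T: "T \<in> Pow S"
    hence fT: "finite T" using assms finite_subset by auto
    show "?thesis T"
    proof (cases "i \<in> T")
      case True
      have "(\<Prod>k\<in>T. y k) = 0" using fT True by (metis prod_zero_iff fun_upd_same y_def)
      then show ?thesis using True by simp
    next
      case False
      then have "(\<Prod>k\<in>T. y k) = (\<Prod>k\<in>T. x k)" by (intro prod.cong) (auto simp: y_def)
      then show ?thesis using False by simp
    qed
  qed
  have Q: "(\<Sum>T\<in>Pow S. (\<Prod>k\<in>T. y k) * (\<Prod>k\<in>S - T. 1 - x k))
     = (\<Sum>T\<in>Pow S. if i \<in> T then 0 else (\<Prod>k\<in>T. x k) * (\<Prod>k\<in>S - T. 1 - x k))"
    by (rule sum.cong) (rule refl, rule Y)
  have A: "1 - x i = (\<Sum>T\<in>Pow S. if i \<in> T then 0 else (\<Prod>k\<in>T. x k) * (\<Prod>k\<in>S - T. 1 - x k))"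
    using P1 P2 P3 Q by linarith
  have "(\<Sum>T\<in>Pow S. if i \<in> T then 0 else (\<Prod>k\<in>T. x k) * (\<Prod>k\<in>S - T. 1 - x k))
     + (\<Sum>T\<in>Pow S. if i \<in> T then (\<Prod>k\<in>T. x k) * (\<Prod>k\<in>S - T. 1 - x k) else 0)
     = (\<Sum>T\<in>Pow S. (\<Prod>k\<in>T. x k) * (\<Prod>k\<in>S - T. 1 - x k))"
    by (subst sum.distrib[symmetric]) (rule sum.cong, auto)
  with A psum1[of S x, OF assms(1)] show ?thesis by linarith
qed

theorem lemma5:
  fixes m :: nat and f :: "nat set \<Rightarrow> real" and x :: "nat \<Rightarrow> real"
  assumes nonneg: "\<forall>A. A \<subseteq> {1..m} \<longrightarrow> 0 \<le> f A"
    and mono: "monotone_on_sets m f"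
    and submod: "submodular_on m f"
    and x_range: "\<forall>i\<in>{1..m}. 0 \<le> x i \<and> x i \<le> 1"
    and x_sum: "(\<Sum>i=1..m. x i) \<le> 1"
  shows "multilinear_ext m f x \<le> (\<Sum>i=1..m. x i * f {i}) + (1 - (\<Sum>i=1..m. x i)) * f {}"
proof -
  define S where "S = {1..m::nat}"
  define p where "p T = (\<Prod>k\<in>T. x k) * (\<Prod>k\<in>S - T. 1 - x k)" for T
  define d where "d i = f {i} - f {}" for i
  have fS: "finite S" by (simp add: S_def)
  have pnn: "p T \<ge> 0" if "T \<in> Pow S" for T
    unfolding p_def using that x_range unfolding S_def
    by (intro mult_nonneg_nonneg prod_nonneg) auto
  have "multilinear_ext m f x = (\<Sum>T\<in>Pow S. p T * f T)"
    by (simp add: multilinear_ext_def S_def p_def)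
  also have "\<dots> \<le> (\<Sum>T\<in>Pow S. p T * (f {} + (\<Sum>i\<in>T. d i)))"
  proof (rule sum_mono)
    fix T assume T: "T \<in> Pow S"
    have "f T \<le> f {} + (\<Sum>i\<in>T. d i)"
      using subadd[OF submod, of T] T fS finite_subset unfolding d_def S_def by auto
    then show "p T * f T \<le> p T * (f {} + (\<Sum>i\<in>T. d i))"
      using pnn[OF T] by (rule mult_left_mono)
  qed
  also have "\<dots> = f {} * (\<Sum>T\<in>Pow S. p T) + (\<Sum>T\<in>Pow S. \<Sum>i\<in>S. d i * (if i \<in> T then p T else 0))"
  proof -
    have "\<And>T. T \<in> Pow S \<Longrightarrow> p T * (\<Sum>i\<in>T. d i) = (\<Sum>i\<in>S. d i * (if i \<in> T then p T else 0))"
    proof -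
      fix T assume T: "T \<in> Pow S"
      have "(\<Sum>i\<in>S. d i * (if i \<in> T then p T else 0)) = (\<Sum>i\<in>S \<inter> T. d i * p T)"
        using fS by (simp add: sum.inter_restrict if_distrib cong: if_cong)
      also have "S \<inter> T = T" using T by auto
      finally show "p T * (\<Sum>i\<in>T. d i) = (\<Sum>i\<in>S. d i * (if i \<in> T then p T else 0))"
        by (simp add: sum_distrib_left mult.commute)
    qed
    then have "(\<Sum>T\<in>Pow S. p T * (f {} + (\<Sum>i\<in>T. d i)))
       = (\<Sum>T\<in>Pow S. f {} * p T + (\<Sum>i\<in>S. d i * (if i \<in> T then p T else 0)))"
      by (intro sum.cong) (simp_all add: distrib_left mult.commute)
    then show ?thesis by (simp only: sum.distrib sum_distrib_left)
  qed
  also have "\<dots> = f {} + (\<Sum>i\<in>S. d i * x i)"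
  proof -
    have "(\<Sum>T\<in>Pow S. \<Sum>i\<in>S. d i * (if i \<in> T then p T else 0))
        = (\<Sum>i\<in>S. d i * (\<Sum>T\<in>Pow S. if i \<in> T then p T else 0))"
      by (subst sum.swap) (simp add: sum_distrib_left)
    also have "\<dots> = (\<Sum>i\<in>S. d i * x i)"
      using psumi[OF fS] unfolding p_def by simp
    finally show ?thesis using psum1[OF fS] unfolding p_def by simp
  qed
  also have "\<dots> = (\<Sum>i=1..m. x i * f {i}) + (1 - (\<Sum>i=1..m. x i)) * f {}"
  proof -
    have "(\<Sum>i\<in>S. d i * x i) = (\<Sum>i\<in>S. x i * f {i} - f {} * x i)"
      by (intro sum.cong) (simp_all add: d_def algebra_simps)
    also have "\<dots> = (\<Sum>i\<in>S. x i * f {i}) - f {} * (\<Sum>i\<in>S. x i)"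
      by (simp only: sum_subtractf sum_distrib_left)
    finally show ?thesis unfolding S_def by (simp add: algebra_simps)
  qed
  finally show ?thesis .
qed

end
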